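(* Let $\mathcal L$ be a finite-dimensional Lie algebra over $\mathbb Q_p$ with $(\mathcal L,\mathcal L)=\mathcal L$, of dimension $d$, and let $\sigma$ be a Lie algebra automorphism of $\mathcal L$ of order $2$, with type $t_\sigma(\mathcal L)=(a,b)$. Then $a\ne0$ and $b>1$.
   Context: $t_\sigma(\mathcal L)=(a,b)$ with $a=\dim\ker(\sigma-\mathrm{id})$ and $b=\dim\ker(\sigma+\mathrm{id})$, so $a+b=d$. *)

theory Defs
  imports Complex_Main "HOL-Computational_Algebra.Primes"
begin

text \<open>The field Q_p, characterised up to isomorphism: a field K with an absolute
value N which extends the p-adic absolute value of the rationals, in which the
rationals are dense and which is complete with respect to N (i.e. K is the completion
of Q with respect to the p-adic absolute value).\<close>

definition padic_abs_int :: "nat \<Rightarrow> int \<Rightarrow> real" where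
  "padic_abs_int p n = (if n = 0 then 0 else real p powr (- real (multiplicity (int p) n)))"

definition is_Qp :: "nat \<Rightarrow> ('k::field \<Rightarrow> real) \<Rightarrow> bool" where
  "is_Qp p N \<longleftrightarrow>
     prime p \<and>
     (\<forall>x. N x \<ge> 0) \<and> (\<forall>x. N x = 0 \<longleftrightarrow> x = 0) \<and>
     (\<forall>x y. N (x * y) = N x * N y) \<and> (\<forall>x y. N (x + y) \<le> N x + N y) \<and>
     (\<forall>n::int. N (of_int n) = padic_abs_int p n) \<and>
     (\<forall>x e. e > 0 \<longrightarrow> (\<exists>a b::int. b \<noteq> 0 \<and> N (x - of_int a / of_int b) < e)) \<and>
     (\<forall>X::nat \<Rightarrow> 'k. (\<forall>e>0. \<exists>M. \<forall>m\<ge>M. \<forall>n\<ge>M. N (X m - X n) < e) \<longrightarrow>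
         (\<exists>L. \<forall>e>0. \<exists>M. \<forall>n\<ge>M. N (X n - L) < e))"

definition lie_algebra :: "('k::field \<Rightarrow> 'v::ab_group_add \<Rightarrow> 'v) \<Rightarrow> ('v \<Rightarrow> 'v \<Rightarrow> 'v) \<Rightarrow> bool" where
  "lie_algebra scale br \<longleftrightarrow>
     vector_space scale \<and>
     (\<forall>x y z. br (x + y) z = br x z + br y z) \<and>
     (\<forall>c x y. br (scale c x) y = scale c (br x y)) \<and>
     (\<forall>x y z. br x (y + z) = br x y + br x z) \<and>
     (\<forall>c x y. br x (scale c y) = scale c (br x y)) \<and>
     (\<forall>x. br x x = 0) \<and>
     (\<forall>x y z. br x (br y z) + br y (br z x) + br z (br x y) = 0)"

definition finite_dim_lie :: "('k::field \<Rightarrow> 'v::ab_group_add \<Rightarrow> 'v) \<Rightarrow> bool" where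
  "finite_dim_lie scale \<longleftrightarrow> (\<exists>B. finite B \<and> module.span scale B = UNIV)"

definition perfect_lie :: "('k::field \<Rightarrow> 'v::ab_group_add \<Rightarrow> 'v) \<Rightarrow> ('v \<Rightarrow> 'v \<Rightarrow> 'v) \<Rightarrow> bool" where
  "perfect_lie scale br \<longleftrightarrow> module.span scale {br x y | x y. True} = UNIV"

definition lie_automorphism :: "('k::field \<Rightarrow> 'v::ab_group_add \<Rightarrow> 'v) \<Rightarrow> ('v \<Rightarrow> 'v \<Rightarrow> 'v) \<Rightarrow> ('v \<Rightarrow> 'v) \<Rightarrow> bool" where
  "lie_automorphism scale br \<sigma> \<longleftrightarrow>
     Vector_Spaces.linear scale scale \<sigma> \<and> bij \<sigma> \<and> (\<forall>x y. \<sigma> (br x y) = br (\<sigma> x) (\<sigma> y))"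

definition has_order_two :: "('v \<Rightarrow> 'v) \<Rightarrow> bool" where
  "has_order_two \<sigma> \<longleftrightarrow> \<sigma> \<circ> \<sigma> = id \<and> \<sigma> \<noteq> id"

definition lie_type :: "('k::field \<Rightarrow> 'v::ab_group_add \<Rightarrow> 'v) \<Rightarrow> ('v \<Rightarrow> 'v) \<Rightarrow> nat \<times> nat" where
  "lie_type scale \<sigma> = (vector_space.dim scale {x. \<sigma> x - x = 0}, vector_space.dim scale {x. \<sigma> x + x = 0})"

end

theory Submission
  imports Defs
begin

theorem mainTheorem13:
  fixes p :: nat and N :: "'k::field \<Rightarrow> real"
    and scale :: "'k \<Rightarrow> 'v::ab_group_add \<Rightarrow> 'v" and br :: "'v \<Rightarrow> 'v \<Rightarrow> 'v"
    and \<sigma> :: "'v \<Rightarrow> 'v" and a b :: nat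
  assumes "is_Qp p N"
    and "lie_algebra scale br"
    and "finite_dim_lie scale"
    and "perfect_lie scale br"
    and "lie_automorphism scale br \<sigma>"
    and "has_order_two \<sigma>"
    and "lie_type scale \<sigma> = (a, b)"
  shows "a \<noteq> 0 \<and> b > 1"
proof -
  have vs: "vector_space scale" and
    badd1: "\<And>x y z. br (x + y) z = br x z + br y z" and
    bsc1: "\<And>c x y. br (scale c x) y = scale c (br x y)" and
    badd2: "\<And>x y z. br x (y + z) = br x y + br x z" and
    bsc2: "\<And>c x y. br x (scale c y) = scale c (br x y)" and
    balt: "\<And>x. br x x = 0" and
    jac: "\<And>x y z. br x (br y z) + br y (br z x) + br z (br x y) = 0"
    using assms(2) unfolding lie_algebra_def by blast+
  interpret vector_space scale by (rule vs)
  obtain F where F: "finite F" "span F = UNIV"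
    using assms(3) unfolding finite_dim_lie_def by blast
  have lin: "Vector_Spaces.linear scale scale \<sigma>" and bijs: "bij \<sigma>"
    and shom: "\<And>x y. \<sigma> (br x y) = br (\<sigma> x) (\<sigma> y)"
    using assms(5) unfolding lie_automorphism_def by blast+
  have sadd: "\<And>x y. \<sigma> (x + y) = \<sigma> x + \<sigma> y" and ssc: "\<And>c x. \<sigma> (scale c x) = scale c (\<sigma> x)"
    using lin Vector_Spaces.linear_iff[of scale scale \<sigma>] by auto
  have s0: "\<sigma> 0 = 0" using sadd[of 0 0] by simp
  have sneg: "\<sigma> (- x) = - \<sigma> x" for x using sadd[of x "-x"] s0 by (simp add: add.inverse_unique)
  have ss: "\<sigma> (\<sigma> x) = x" for x using assms(6) unfolding has_order_two_def
    by (metis comp_apply id_apply)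
  have snid: "\<sigma> \<noteq> id" using assms(6) unfolding has_order_two_def by blast
  have dims: "dim {x. \<sigma> x - x = 0} = a" "dim {x. \<sigma> x + x = 0} = b"
    using assms(7) unfolding lie_type_def by auto
  have b01: "br 0 y = 0" for y using badd1[of 0 0 y] by simp
  have b02: "br x 0 = 0" for x using badd2[of x 0 0] by simp
  have bneg1: "br (- x) y = - br x y" for x y using badd1[of x "-x" y] b01
    by (simp add: add.inverse_unique)
  have bneg2: "br x (- y) = - br x y" for x y using badd2[of x y "-y"] b02
    by (simp add: add.inverse_unique)
  have anti: "br x y = - br y x" for x y
  proof -
    have "br (x + y) (x + y) = 0" by (rule balt)
    then have "br x y + br y x = 0" using balt[of x] balt[of y] by (simp add: badd1 badd2 add.commute)
    then show ?thesis by (metis add.inverse_unique add.commute)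
  qed
  have two: "(2::'k) \<noteq> 0"
  proof
    assume "(2::'k) = 0"
    have Qp: "prime p" "\<forall>n::int. N (of_int n) = padic_abs_int p n" "\<forall>x. N x = 0 \<longleftrightarrow> x = 0"
      using assms(1) unfolding is_Qp_def by blast+
    have "N (of_int 2) = padic_abs_int p 2" using Qp(2) by blast
    moreover have "padic_abs_int p 2 > 0" using Qp(1) prime_gt_0_nat
      unfolding padic_abs_int_def by simp
    moreover have "N (of_int 2) = 0" using \<open>(2::'k) = 0\<close> Qp(3) by simp
    ultimately show False by simp
  qed
  define h :: 'k where "h = inverse 2"
  have hh: "h + h = 1" unfolding h_def mult_2[symmetric] using two by simp
  have half: "scale h (x + x) = x" for x :: 'v
  proof -
    have "scale h (x + x) = scale (h + h) x" by (simp only: scale_left_distrib scale_right_distrib)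
    then show ?thesis using hh by simp
  qed
  have dbl0: "x + x = 0 \<Longrightarrow> x = 0" for x :: 'v using half[of x] by simp
  define Pp where "Pp x = scale h (x + \<sigma> x)" for x
  define Pm where "Pm x = scale h (x - \<sigma> x)" for x
  have decomp: "x = Pp x + Pm x" for x
  proof -
    have "Pp x + Pm x = scale h (x + \<sigma> x + (x - \<sigma> x))"
      unfolding Pp_def Pm_def by (simp only: scale_right_distrib[symmetric])
    also have "x + \<sigma> x + (x - \<sigma> x) = x + x" by (simp add: algebra_simps)
    finally show ?thesis using half by simp
  qed
  have sPp: "\<sigma> (Pp x) = Pp x" for x unfolding Pp_def
    by (simp add: ssc sadd ss add.commute)
  have sdiff: "\<sigma> (x - y) = \<sigma> x - \<sigma> y" for x y
    by (simp only: diff_conv_add_uminus sadd sneg)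
  have sPm: "\<sigma> (Pm x) = - Pm x" for x
  proof -
    have "\<sigma> (Pm x) = scale h (\<sigma> x - x)" unfolding Pm_def by (simp only: ssc sdiff ss)
    also have "\<sigma> x - x = - (x - \<sigma> x)" by simp
    finally show ?thesis unfolding Pm_def by (simp only: scale_minus_right)
  qed
  have Ppadd: "Pp (x + y) = Pp x + Pp y" for x y
  proof -
    have "x + y + \<sigma> (x + y) = (x + \<sigma> x) + (y + \<sigma> y)" by (simp add: sadd add_ac)
    then show ?thesis unfolding Pp_def by (simp only: scale_right_distrib)
  qed
  have Pmadd: "Pm (x + y) = Pm x + Pm y" for x y
  proof -
    have "x + y - \<sigma> (x + y) = (x - \<sigma> x) + (y - \<sigma> y)" by (simp add: sadd)
    then show ?thesis unfolding Pm_def by (simp only: scale_right_distrib)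
  qed
  have Ppsc: "Pp (scale c x) = scale c (Pp x)" for c x unfolding Pp_def
    by (simp add: ssc scale_right_distrib[symmetric] mult.commute)
  have Pmsc: "Pm (scale c x) = scale c (Pm x)" for c x unfolding Pm_def
    by (simp add: ssc scale_right_diff_distrib[symmetric] mult.commute)
  have Pp0: "Pp 0 = 0" unfolding Pp_def by (simp add: s0)
  have Pm0: "Pm 0 = 0" unfolding Pm_def by (simp add: s0)
  have Ppfix: "\<sigma> w = w \<Longrightarrow> Pp w = w" for w unfolding Pp_def using half by simp
  have Ppanti: "\<sigma> w = - w \<Longrightarrow> Pp w = 0" for w unfolding Pp_def by simp
  have Pmfix: "\<sigma> w = w \<Longrightarrow> Pm w = 0" for w unfolding Pm_def by simp
  have Pmanti: "\<sigma> w = - w \<Longrightarrow> Pm w = w" for w unfolding Pm_def using half by simp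
  have brdec: "Pp (br x y) = br (Pp x) (Pp y) + br (Pm x) (Pm y) \<and>
               Pm (br x y) = br (Pp x) (Pm y) + br (Pm x) (Pp y)" for x y
  proof -
    have e: "br x y = br (Pp x) (Pp y) + br (Pp x) (Pm y) + br (Pm x) (Pp y) + br (Pm x) (Pm y)"
      by (subst decomp[of x], subst decomp[of y]) (simp add: badd1 badd2 add.assoc)
    have s1: "\<sigma> (br (Pp x) (Pp y)) = br (Pp x) (Pp y)" by (simp add: shom sPp)
    have s2: "\<sigma> (br (Pp x) (Pm y)) = - br (Pp x) (Pm y)" by (simp add: shom sPp sPm bneg2)
    have s3: "\<sigma> (br (Pm x) (Pp y)) = - br (Pm x) (Pp y)" by (simp add: shom sPp sPm bneg1)
    have s4: "\<sigma> (br (Pm x) (Pm y)) = br (Pm x) (Pm y)" by (simp add: shom sPm bneg1 bneg2)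
    show ?thesis
      apply (subst (1 2) e)
      apply (simp only: Ppadd Pmadd Ppfix[OF s1] Ppanti[OF s2] Ppanti[OF s3] Ppfix[OF s4]
          Pmfix[OF s1] Pmanti[OF s2] Pmanti[OF s3] Pmfix[OF s4])
      by simp
  qed
  have basisS: "\<exists>B. B \<subseteq> S \<and> independent B \<and> S \<subseteq> span B \<and> finite B \<and> card B = dim S" for S
  proof -
    obtain B where B: "B \<subseteq> S" "independent B" "S \<subseteq> span B" "card B = dim S"
      by (rule basis_exists)
    have "finite B" using independent_span_bound[OF F(1) B(2)] F(2) by auto
    with B show ?thesis by blast
  qed
  have dim0: "dim S = 0 \<Longrightarrow> S \<subseteq> {0}" for S
    using basisS[of S] by auto
  have dim1: "dim S = 1 \<Longrightarrow> \<exists>v. v \<in> S \<and> v \<noteq> 0 \<and> (\<forall>w\<in>S. \<exists>c. w = scale c v)" for S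
  proof -
    assume "dim S = 1"
    then obtain B where B: "B \<subseteq> S" "independent B" "S \<subseteq> span B" "card B = 1"
      using basisS[of S] by auto
    then obtain v where v: "B = {v}" using card_1_singletonE by blast
    have "v \<noteq> 0" using B(2) v dependent_zero by blast
    moreover have "\<forall>w\<in>S. \<exists>c. w = scale c v" using B(3) v span_singleton by auto
    ultimately show ?thesis using B(1) v by blast
  qed
  have sid: False if "\<And>x. \<sigma> x = x"
    using snid that by auto
  have a0: "a \<noteq> 0"
  proof
    assume "a = 0"
    then have "{x. \<sigma> x - x = 0} \<subseteq> {0}" using dim0 dims(1) by simp
    then have "Pp x = 0" for x using sPp[of x] by auto
    then have sm: "\<sigma> x = - x" for x using decomp[of x] sPm[of x] by simp
    have "br x y = 0" for x y
    proof -
      have "\<sigma> (br x y) = br x y" using shom[of x y] sm[of x] sm[of y] by (simp add: bneg1 bneg2)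
      then have "- br x y = br x y" using sm[of "br x y"] by simp
      then have "br x y + br x y = 0" by (metis add.right_inverse)
      then show ?thesis by (rule dbl0)
    qed
    then have "{br x y |x y. True} \<subseteq> {0}" by auto
    then have "span {br x y |x y. True} \<subseteq> {0}"
      using span_minimal subspace_single_0 by blast
    then have "\<And>x::'v. x = 0" using assms(4) unfolding perfect_lie_def by auto
    then show False using sid by metis
  qed
  have b1: "b > 1"
  proof (rule ccontr)
    assume "\<not> b > 1"
    then consider "b = 0" | "b = 1" by linarith
    then show False
    proof cases
      case 1
      then have "{x. \<sigma> x + x = 0} \<subseteq> {0}" using dim0 dims(2) by simp
      moreover have "\<sigma> (Pm x) + Pm x = 0" for x using sPm[of x] by simp
      ultimately have "Pm x = 0" for x by blast
      then have "\<sigma> x = x" for x using decomp[of x] sPp[of x] by (metis add.right_neutral)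
      then show False using sid by blast
    next
      case 2
      then obtain v where v: "\<sigma> v + v = 0" "v \<noteq> 0"
        and vs: "\<And>w. \<sigma> w + w = 0 \<Longrightarrow> \<exists>c. w = scale c v"
        using dim1[of "{x. \<sigma> x + x = 0}"] dims(2) by auto
      have inm: "\<sigma> (Pm x) + Pm x = 0" for x using sPm by simp
      have lam: "\<exists>c. br u v = scale c v" if "\<sigma> u = u" for u
      proof -
        have "\<sigma> v = - v" using v(1) by (simp add: eq_neg_iff_add_eq_0)
        then have "\<sigma> (br u v) + br u v = 0" using that by (simp add: shom bneg2)
        then show ?thesis using vs by blast
      qed
      have J: "br (br u1 u2) v = 0" if u1: "\<sigma> u1 = u1" and u2: "\<sigma> u2 = u2" for u1 u2
      proof -
        obtain c1 where c1: "br u1 v = scale c1 v" using lam[OF u1] by blast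
        obtain c2 where c2: "br u2 v = scale c2 v" using lam[OF u2] by blast
        have j: "br v (br u1 u2) + br u1 (br u2 v) + br u2 (br v u1) = 0" by (rule jac)
        have "br u1 (br u2 v) = scale (c2 * c1) v" using c1 c2 by (simp add: bsc2)
        moreover have "br u2 (br v u1) = - scale (c1 * c2) v"
          using c1 c2 anti[of v u1] by (simp add: bsc2 bneg2)
        ultimately have "br v (br u1 u2) = 0" using j by (simp add: mult.commute)
        then show ?thesis using anti[of "br u1 u2" v] by simp
      qed
      have Pmv: "br (Pm x) (Pm y) = 0" for x y
      proof -
        obtain c where "Pm x = scale c v" using vs inm by blast
        moreover obtain d where "Pm y = scale d v" using vs inm by blast
        ultimately show ?thesis by (simp add: bsc1 bsc2 balt)
      qed
      define S where "S = {z. br (Pp z) v = 0}"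
      have subS: "subspace S" unfolding subspace_def S_def
        by (simp add: Pp0 b01 Ppadd badd1 Ppsc bsc1)
      have "{br x y |x y. True} \<subseteq> S"
        unfolding S_def using brdec Pmv J sPp by auto
      then have "UNIV \<subseteq> S" using span_minimal[OF _ subS] assms(4)
        unfolding perfect_lie_def by blast
      then have kill: "br (Pp z) v = 0" for z unfolding S_def by blast
      have kill2: "br (Pp z) (Pm y) = 0" for z y
      proof -
        obtain d where "Pm y = scale d v" using vs inm by blast
        then show ?thesis by (simp add: bsc2 kill)
      qed
      define T where "T = {z. Pm z = 0}"
      have subT: "subspace T" unfolding subspace_def T_def
        by (simp add: Pm0 Pmadd Pmsc)
      have "{br x y |x y. True} \<subseteq> T"
      proof -
        have "Pm (br x y) = 0" for x y
        proof -
          have "br (Pm x) (Pp y) = 0" using anti[of "Pm x" "Pp y"] kill2[of y x] by simp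
          then show ?thesis using brdec[of x y] kill2[of x y] by simp
        qed
        then show ?thesis unfolding T_def by blast
      qed
      then have "UNIV \<subseteq> T" using span_minimal[OF _ subT] assms(4)
        unfolding perfect_lie_def by blast
      then have "Pm v = 0" unfolding T_def by blast
      moreover have "Pm v = v" using v(1) Pmanti[of v] by (metis add.inverse_unique add.commute)
      ultimately show False using v(2) by simp
    qed
  qed
  show ?thesis using a0 b1 by blast
qed

end
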